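(* Assume the distribution $\mathcal D_2(\lambda)$ defined in the context and consider its marginal on $\mathbf X_1\setminus\{X_a\}$, with structures ranging over DAGs on $\mathbf X_1\setminus\{X_a\}$ with in-degree at most $k$. There is a unique optimal Markov equivalence class for this marginal, and the difference in scores between the optimal equivalence class and the second-best equivalence class is at least $\beta$.
   Context: Entropies use the natural logarithm; $k$ is a fixed positive integer. For a set of variables, a family is $\langle Y,\Pi\rangle$ with $\Pi$ not containing $Y$ and $|\Pi|\le k$, with $H(\langle Y,\Pi\rangle)=H(Y\mid\Pi)$; DAGs are identified with their sets of families and have score $\mathcal S(G)=-\sum_{f\in G}H(f)$. Markov-equivalent DAGs (same conditional independence constraints) form equivalence classes (ECs) with a common score. Construction. $\mathcal D_1$ is a distribution over a finite set $\mathbf X_1$ of at least $k$ discrete variables, containing a variable $X_a$, such that for some $\alpha,\beta>0$: (I) among DAGs over $\mathbf X_1$ with in-degree $\le k$ there is a unique optimal EC, with score gap at least $\beta$ to the next-best EC; (II) $X_a$ has no children in any structure of the optimal EC; (III) $H(X_a\mid\mathbf X_1\setminus\{X_a\})=\alpha$. Let $\mathbf X=\mathbf X_1\cup\{X_b\}$, $d=|\mathbf X|$. For $\lambda\in(0,\min(\alpha,\beta/(3d)))$, $\mathcal D_2(\lambda)$ is a distribution on $\mathbf X$ with marginal $\mathcal D_1$ on $\mathbf X_1$ such that: (IV) there is a hidden Bernoulli variable $C$ independent of $\mathbf X_1$ with $P[X_b=X_a\mid C=1]=1$ and $X_b$ independent of $\mathbf X_1$ given $C=0$; (V) $\max(H(X_b\mid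 X_a),H(X_a\mid X_b))=\lambda$. *)

theory Defs
  imports "HOL-Probability.Probability_Mass_Function" "HOL-Library.FuncSet"
begin

definition marg :: "('v \<Rightarrow> 'a) pmf \<Rightarrow> 'v set \<Rightarrow> ('v \<Rightarrow> 'a) pmf" where
  "marg P S = map_pmf (\<lambda>\<omega>. restrict \<omega> S) P"

definition ent :: "('v \<Rightarrow> 'a) pmf \<Rightarrow> 'v set \<Rightarrow> real" where
  "ent P S = - (\<Sum>z \<in> set_pmf (marg P S). pmf (marg P S) z * ln (pmf (marg P S) z))"

definition cond_ent :: "('v \<Rightarrow> 'a) pmf \<Rightarrow> 'v \<Rightarrow> 'v set \<Rightarrow> real" where
  "cond_ent P Y Par = ent P (insert Y Par) - ent P Par"

text \<open>A DAG on V with in-degree at most k, given by its parent function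
  (equivalently its set of families \<langle>v, G v\<rangle>, v \<in> V).\<close>
definition is_dag :: "'v set \<Rightarrow> nat \<Rightarrow> ('v \<Rightarrow> 'v set) \<Rightarrow> bool" where
  "is_dag V k G \<longleftrightarrow> (\<forall>v. G v \<subseteq> V - {v}) \<and> (\<forall>v. v \<notin> V \<longrightarrow> G v = {})
     \<and> (\<forall>v. card (G v) \<le> k) \<and> acyclic {(u, w). u \<in> G w}"

definition score :: "('v \<Rightarrow> 'a) pmf \<Rightarrow> 'v set \<Rightarrow> ('v \<Rightarrow> 'v set) \<Rightarrow> real" where
  "score P V G = - (\<Sum>v \<in> V. cond_ent P v (G v))"

definition adjacent :: "('v \<Rightarrow> 'v set) \<Rightarrow> 'v \<Rightarrow> 'v \<Rightarrow> bool" where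
  "adjacent G u w \<longleftrightarrow> u \<in> G w \<or> w \<in> G u"

definition is_trail :: "('v \<Rightarrow> 'v set) \<Rightarrow> 'v list \<Rightarrow> bool" where
  "is_trail G xs \<longleftrightarrow> xs \<noteq> [] \<and> distinct xs \<and>
     (\<forall>i. i + 1 < length xs \<longrightarrow> adjacent G (xs ! i) (xs ! (i + 1)))"

definition descendant :: "('v \<Rightarrow> 'v set) \<Rightarrow> 'v \<Rightarrow> 'v \<Rightarrow> bool" where
  "descendant G u w \<longleftrightarrow> (u, w) \<in> {(a, b). a \<in> G b}\<^sup>*"

definition active_trail :: "('v \<Rightarrow> 'v set) \<Rightarrow> 'v set \<Rightarrow> 'v list \<Rightarrow> bool" where
  "active_trail G Z xs \<longleftrightarrow> (\<forall>i. 0 < i \<and> i + 1 < length xs \<longrightarrow>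
     (if xs ! (i - 1) \<in> G (xs ! i) \<and> xs ! (i + 1) \<in> G (xs ! i)
      then (\<exists>d \<in> Z. descendant G (xs ! i) d)
      else xs ! i \<notin> Z))"

definition d_separated :: "('v \<Rightarrow> 'v set) \<Rightarrow> 'v \<Rightarrow> 'v \<Rightarrow> 'v set \<Rightarrow> bool" where
  "d_separated G x y Z \<longleftrightarrow>
     \<not> (\<exists>xs. is_trail G xs \<and> hd xs = x \<and> last xs = y \<and> active_trail G Z xs)"

definition markov_equiv :: "'v set \<Rightarrow> ('v \<Rightarrow> 'v set) \<Rightarrow> ('v \<Rightarrow> 'v set) \<Rightarrow> bool" where
  "markov_equiv V G1 G2 \<longleftrightarrow> (\<forall>x\<in>V. \<forall>y\<in>V. \<forall>Z. Z \<subseteq> V \<and> x \<noteq> y \<and> x \<notin> Z \<and> y \<notin> Z \<longrightarrow>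
     (d_separated G1 x y Z \<longleftrightarrow> d_separated G2 x y Z))"

text \<open>G is a member of the unique optimal equivalence class among DAGs on V with in-degree
  \<le> k, and every DAG outside its class scores at least \<beta> less.\<close>
definition optimal_with_gap ::
  "('v \<Rightarrow> 'a) pmf \<Rightarrow> 'v set \<Rightarrow> nat \<Rightarrow> real \<Rightarrow> ('v \<Rightarrow> 'v set) \<Rightarrow> bool" where
  "optimal_with_gap P V k \<beta> G \<longleftrightarrow> is_dag V k G
     \<and> (\<forall>G'. is_dag V k G' \<longrightarrow> score P V G' \<le> score P V G)
     \<and> (\<forall>G'. is_dag V k G' \<and> \<not> markov_equiv V G' G \<longrightarrow> score P V G' \<le> score P V G - \<beta>)"

end

theory Submission imports Defs begin

lemma desc_ext1:
  assumes "\<forall>v. a \<notin> H v" "a \<notin> P"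
    and "(u,d) \<in> {(p,c). p \<in> (H(a:=P)) c}\<^sup>*"
  shows "d = a \<or> (u,d) \<in> {(p,c). p \<in> H c}\<^sup>*"
  using assms(3)
proof (induction rule: rtrancl_induct)
  case base then show ?case by simp
next
  case (step b c)
  show ?case
  proof (cases "c = a")
    case True then show ?thesis by simp
  next
    case False
    with step.hyps(2) have "b \<in> H c" by simp
    with assms(1) have "b \<noteq> a" by auto
    with step.IH have "(u,b) \<in> {(p,c). p \<in> H c}\<^sup>*" by simp
    with \<open>b \<in> H c\<close> show ?thesis by (simp add: rtrancl.rtrancl_into_rtrancl)
  qed
qed

lemma desc_ext_a:
  assumes "\<forall>v. a \<notin> H v" "a \<notin> P"
    and "(a,d) \<in> {(p,c). p \<in> (H(a:=P)) c}\<^sup>*"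
  shows "d = a"
  using assms(3)
proof (cases rule: converse_rtranclE)
  case base then show ?thesis by simp
next
  case (step b)
  then have "a \<in> (H(a:=P)) b" by simp
  with assms(1,2) show ?thesis by (cases "b = a") auto
qed

lemma desc_mono:
  assumes "H a = {}" "(u,d) \<in> {(p,c). p \<in> H c}\<^sup>*"
  shows "(u,d) \<in> {(p,c). p \<in> (H(a:=P)) c}\<^sup>*"
proof -
  have "{(p,c). p \<in> H c} \<subseteq> {(p,c). p \<in> (H(a:=P)) c}" using assms(1) by auto
  then show ?thesis using assms(2) rtrancl_mono by blast
qed

lemma desc_eq:
  assumes "\<forall>v. a \<notin> H v" "a \<notin> P" "H a = {}" "d \<noteq> a"
  shows "descendant (H(a:=P)) u d \<longleftrightarrow> descendant H u d"
  using desc_ext1[OF assms(1,2)] desc_mono[of H a, OF assms(3)] assms(4)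
  unfolding descendant_def by blast

lemma transfer:
  assumes "\<forall>v. a \<notin> H v" "a \<notin> P" "H a = {}" "a \<notin> set xs" "a \<notin> Z"
  shows "is_trail (H(a:=P)) xs \<longleftrightarrow> is_trail H xs"
    and "active_trail (H(a:=P)) Z xs \<longleftrightarrow> active_trail H Z xs"
proof -
  have ne: "\<And>i. i < length xs \<Longrightarrow> xs ! i \<noteq> a" using assms(4) nth_mem by force
  have adj: "\<And>i. i + 1 < length xs \<Longrightarrow> adjacent (H(a:=P)) (xs ! i) (xs ! (i+1)) \<longleftrightarrow> adjacent H (xs ! i) (xs ! (i+1))"
    using ne unfolding adjacent_def
    by (metis Suc_eq_plus1 Suc_lessD fun_upd_other)
  then show "is_trail (H(a:=P)) xs \<longleftrightarrow> is_trail H xs"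
    unfolding is_trail_def by auto
  have dd: "\<And>u. (\<exists>d\<in>Z. descendant (H(a:=P)) u d) \<longleftrightarrow> (\<exists>d\<in>Z. descendant H u d)"
    using desc_eq[OF assms(1,2,3)] assms(5) by metis
  have "\<And>i. 0 < i \<and> i + 1 < length xs \<Longrightarrow>
     ((if xs ! (i - 1) \<in> (H(a:=P)) (xs ! i) \<and> xs ! (i + 1) \<in> (H(a:=P)) (xs ! i)
      then (\<exists>d \<in> Z. descendant (H(a:=P)) (xs ! i) d)
      else xs ! i \<notin> Z) \<longleftrightarrow>
     (if xs ! (i - 1) \<in> H (xs ! i) \<and> xs ! (i + 1) \<in> H (xs ! i)
      then (\<exists>d \<in> Z. descendant H (xs ! i) d)
      else xs ! i \<notin> Z))"
  proof -
    fix i assume "0 < i \<and> i + 1 < length xs"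
    then have "xs ! i \<noteq> a" using ne by simp
    then show "?thesis i" using dd by simp
  qed
  then show "active_trail (H(a:=P)) Z xs \<longleftrightarrow> active_trail H Z xs"
    unfolding active_trail_def by blast
qed

lemma notin_trail_H:
  assumes "\<forall>v. a \<notin> H v" "H a = {}" "is_trail H xs" "hd xs \<noteq> a"
  shows "a \<notin> set xs"
proof
  assume "a \<in> set xs"
  then obtain j where j: "j < length xs" "xs ! j = a" by (metis in_set_conv_nth)
  have ne: "xs \<noteq> []" using assms(3) is_trail_def by auto
  have "j \<noteq> 0" using j assms(4) ne by (metis hd_conv_nth)
  then have "0 < j" by simp
  have "adjacent H (xs ! (j-1)) (xs ! (j - 1 + 1))"
    using assms(3) j \<open>0 < j\<close> unfolding is_trail_def by (metis Suc_pred' add.commute plus_1_eq_Suc)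
  then show False using j \<open>0 < j\<close> assms(1,2) unfolding adjacent_def by simp
qed

lemma notin_trail_H':
  assumes "\<forall>v. a \<notin> H v" "a \<notin> P" "a \<notin> Z" "is_trail (H(a:=P)) xs"
    "active_trail (H(a:=P)) Z xs" "hd xs \<noteq> a" "last xs \<noteq> a"
  shows "a \<notin> set xs"
proof
  assume "a \<in> set xs"
  then obtain j where j: "j < length xs" "xs ! j = a" by (metis in_set_conv_nth)
  have ne: "xs \<noteq> []" and dist: "distinct xs" using assms(4) is_trail_def by auto
  have "j \<noteq> 0" using j assms(6) ne by (metis hd_conv_nth)
  then have j0: "0 < j" by simp
  have "j \<noteq> length xs - 1" using j assms(7) ne by (metis last_conv_nth)
  then have j1: "j + 1 < length xs" using j by simp
  have n1: "xs ! (j-1) \<noteq> a" using dist j j0 by (metis diff_less less_imp_diff_less nth_eq_iff_index_eq zero_less_one less_irrefl diff_self_eq_0 nat_neq_iff)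
  have n2: "xs ! (j+1) \<noteq> a" using dist j j1 using nth_eq_iff_index_eq by fastforce
  have "adjacent (H(a:=P)) (xs ! (j-1)) (xs ! (j - 1 + 1))"
    using assms(4) j j0 unfolding is_trail_def by (metis Suc_pred' add.commute plus_1_eq_Suc)
  then have "xs ! (j-1) \<in> P" using j j0 n1 assms(1) unfolding adjacent_def by auto
  have "adjacent (H(a:=P)) (xs ! j) (xs ! (j + 1))"
    using assms(4) j1 unfolding is_trail_def by simp
  then have "xs ! (j+1) \<in> P" using j n2 assms(1) unfolding adjacent_def by auto
  have "(if xs ! (j - 1) \<in> (H(a:=P)) (xs ! j) \<and> xs ! (j + 1) \<in> (H(a:=P)) (xs ! j)
      then (\<exists>d \<in> Z. descendant (H(a:=P)) (xs ! j) d)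
      else xs ! j \<notin> Z)" using assms(5) j0 j1 unfolding active_trail_def by blast
  then obtain d where "d \<in> Z" "descendant (H(a:=P)) a d"
    using \<open>xs ! (j-1) \<in> P\<close> \<open>xs ! (j+1) \<in> P\<close> j by auto
  then have "d = a" using desc_ext_a[OF assms(1,2)] unfolding descendant_def by blast
  then show False using \<open>d \<in> Z\<close> assms(3) by simp
qed

lemma dsep_ext:
  assumes "\<forall>v. a \<notin> H v" "H a = {}" "a \<notin> P" "x \<noteq> a" "y \<noteq> a" "a \<notin> Z"
  shows "d_separated (H(a:=P)) x y Z \<longleftrightarrow> d_separated H x y Z"
  unfolding d_separated_def
proof (intro iffI notI)
  assume n: "\<not> (\<exists>xs. is_trail (H(a := P)) xs \<and> hd xs = x \<and> last xs = y \<and> active_trail (H(a := P)) Z xs)"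
  assume "\<exists>xs. is_trail H xs \<and> hd xs = x \<and> last xs = y \<and> active_trail H Z xs"
  then obtain xs where xs: "is_trail H xs" "hd xs = x" "last xs = y" "active_trail H Z xs" by blast
  have "a \<notin> set xs" using notin_trail_H[OF assms(1,2) xs(1)] xs(2) assms(4) by simp
  then show False using n xs transfer[OF assms(1,3,2) _ assms(6)] by blast
next
  assume n: "\<not> (\<exists>xs. is_trail H xs \<and> hd xs = x \<and> last xs = y \<and> active_trail H Z xs)"
  assume "\<exists>xs. is_trail (H(a := P)) xs \<and> hd xs = x \<and> last xs = y \<and> active_trail (H(a := P)) Z xs"
  then obtain xs where xs: "is_trail (H(a := P)) xs" "hd xs = x" "last xs = y" "active_trail (H(a := P)) Z xs" by blast
  have "a \<notin> set xs" using notin_trail_H'[OF assms(1,3,6) xs(1) xs(4)] xs(2,3) assms(4,5) by simp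
  then show False using n xs transfer[OF assms(1,3,2) _ assms(6)] by blast
qed


lemma marg_marg: "marg (marg P A) B = marg P (A \<inter> B)"
  unfolding marg_def by (simp add: map_pmf_comp)

lemma acyc_ext:
  assumes "\<forall>v. a \<notin> H v" "a \<notin> P" "acyclic {(u,w). u \<in> H w}"
  shows "acyclic {(u,w). u \<in> (H(a:=P)) w}"
proof -
  let ?R = "{(u,w). u \<in> H w}" and ?R' = "{(u,w). u \<in> (H(a:=P)) w}"
  have first: "\<And>u w. (u,w) \<in> ?R' \<Longrightarrow> u \<noteq> a" using assms(1,2) by (auto split: if_splits)
  have key: "(x,y) \<in> ?R'\<^sup>+ \<Longrightarrow> y = a \<or> (x,y) \<in> ?R\<^sup>+" for x y
  proof (induction rule: trancl_induct)
    case (base y) then show ?case by (cases "y = a") auto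
  next
    case (step y z)
    show ?case
    proof (cases "z = a")
      case True then show ?thesis by simp
    next
      case False
      with step.hyps(2) have "(y,z) \<in> ?R" by simp
      moreover have "y \<noteq> a" using first step.hyps(2) by blast
      ultimately show ?thesis using step.IH by (meson trancl_into_trancl)
    qed
  qed
  show ?thesis unfolding acyclic_def
  proof (intro allI notI)
    fix x assume x: "(x,x) \<in> ?R'\<^sup>+"
    show False
    proof (cases "x = a")
      case True
      from x obtain z where "(x,z) \<in> ?R'" by (meson converse_tranclE)
      then show False using first True by blast
    next
      case False
      then have "(x,x) \<in> ?R\<^sup>+" using key x by blast
      then show False using assms(3) unfolding acyclic_def by blast
    qed
  qed
qed

theorem lemma10:
  fixes X1 :: "'v set" and Xa Xb :: 'v and k :: nat
    and D1 D2 :: "('v \<Rightarrow> 'a::finite) pmf" and \<alpha> \<beta> lam :: real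
  assumes k_pos: "k > 0"
    and X1_fin: "finite X1" and X1_card: "card X1 \<ge> k" and Xa_in: "Xa \<in> X1"
    and \<alpha>_pos: "\<alpha> > 0" and \<beta>_pos: "\<beta> > 0"
    \<comment> \<open>(I) and (II)\<close>
    and opt1: "\<exists>G. optimal_with_gap D1 X1 k \<beta> G \<and>
                 (\<forall>G'. is_dag X1 k G' \<and> markov_equiv X1 G' G \<longrightarrow> (\<forall>v. Xa \<notin> G' v))"
    \<comment> \<open>(III)\<close>
    and H_a: "cond_ent D1 Xa (X1 - {Xa}) = \<alpha>"
    and Xb_new: "Xb \<notin> X1"
    and lam_pos: "lam > 0"
    and lam_bound: "lam < min \<alpha> (\<beta> / (3 * real (card (insert Xb X1))))"
    \<comment> \<open>D2 has marginal D1 on X1\<close>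
    and marg_D2: "marg D2 X1 = marg D1 X1"
    \<comment> \<open>(IV): hidden Bernoulli variable C\<close>
    and hidden: "\<exists>Q :: (bool \<times> ('v \<Rightarrow> 'a)) pmf.
        map_pmf snd Q = D2
      \<and> (\<forall>c z. measure_pmf.prob Q {(c', \<omega>). c' = c \<and> restrict \<omega> X1 = z}
               = measure_pmf.prob Q {(c', \<omega>). c' = c} * measure_pmf.prob Q {(c', \<omega>). restrict \<omega> X1 = z})
      \<and> (measure_pmf.prob Q {(c, \<omega>). c} > 0 \<longrightarrow>
           measure_pmf.prob Q {(c, \<omega>). c \<and> \<omega> Xb = \<omega> Xa} = measure_pmf.prob Q {(c, \<omega>). c})
      \<and> (\<forall>b z. measure_pmf.prob Q {(c, \<omega>). \<not> c \<and> \<omega> Xb = b \<and> restrict \<omega> X1 = z}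
                 * measure_pmf.prob Q {(c, \<omega>). \<not> c}
               = measure_pmf.prob Q {(c, \<omega>). \<not> c \<and> \<omega> Xb = b}
                 * measure_pmf.prob Q {(c, \<omega>). \<not> c \<and> restrict \<omega> X1 = z})"
    \<comment> \<open>(V)\<close>
    and H_ab: "max (cond_ent D2 Xb {Xa}) (cond_ent D2 Xa {Xb}) = lam"
  shows "\<exists>G. optimal_with_gap (marg D2 (X1 - {Xa})) (X1 - {Xa}) k \<beta> G"
proof -
  obtain G where opt: "optimal_with_gap D1 X1 k \<beta> G"
    and II: "\<forall>G'. is_dag X1 k G' \<and> markov_equiv X1 G' G \<longrightarrow> (\<forall>v. Xa \<notin> G' v)"
    using opt1 by blast
  define V where "V = X1 - {Xa}"
  define P where "P = G Xa"
  define Gr where "Gr = G(Xa := {})"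
  have dagG: "is_dag X1 k G" using opt optimal_with_gap_def by blast
  have meG: "markov_equiv X1 G G" by (simp add: markov_equiv_def)
  have noa: "\<forall>v. Xa \<notin> G v" using II dagG meG by blast
  have GP: "G = Gr(Xa := P)" unfolding Gr_def P_def by auto
  have Psub: "P \<subseteq> V" using dagG unfolding is_dag_def P_def V_def by blast
  have XaP: "Xa \<notin> P" using Psub V_def by blast
  have XaV: "Xa \<notin> V" using V_def by blast
  have entq: "ent (marg D2 V) T = ent D1 T" if "T \<subseteq> V" for T
  proof -
    have "marg (marg D2 V) T = marg D2 T" using that by (simp add: marg_marg Int_absorb1)
    also have "\<dots> = marg (marg D2 X1) T" using that V_def by (simp add: marg_marg Int_absorb1 Diff_subset order_trans)
    also have "\<dots> = marg D1 T" using that V_def marg_D2 by (simp add: marg_marg Int_absorb1 Diff_subset order_trans)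
    finally show ?thesis unfolding ent_def by (simp add: marg_marg)
  qed
  have ce: "cond_ent (marg D2 V) v S = cond_ent D1 v S" if "v \<in> V" "S \<subseteq> V" for v S
    unfolding cond_ent_def using that entq by simp
  have sc: "score (marg D2 V) V H = score D1 X1 (H(Xa:=P)) + cond_ent D1 Xa P"
    if "\<forall>v. H v \<subseteq> V" for H
  proof -
    have X1eq: "X1 = insert Xa V" using V_def Xa_in by blast
    have fV: "finite V" using X1_fin V_def by simp
    have "score D1 X1 (H(Xa:=P)) = - (cond_ent D1 Xa P + (\<Sum>v\<in>V. cond_ent D1 v ((H(Xa:=P)) v)))"
      unfolding score_def X1eq using fV XaV by simp
    also have "(\<Sum>v\<in>V. cond_ent D1 v ((H(Xa:=P)) v)) = (\<Sum>v\<in>V. cond_ent (marg D2 V) v (H v))"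
      using XaV that ce by (intro sum.cong) auto
    finally show ?thesis unfolding score_def by simp
  qed
  have dag_ext: "is_dag X1 k (H(Xa:=P))" if "is_dag V k H" for H
  proof -
    have a: "\<forall>v. Xa \<notin> H v" using that XaV unfolding is_dag_def by blast
    have "acyclic {(u,w). u \<in> (H(Xa:=P)) w}"
      using acyc_ext[OF a XaP] that unfolding is_dag_def by blast
    moreover have "card P \<le> k" using dagG P_def unfolding is_dag_def by blast
    ultimately show ?thesis using that Psub XaV Xa_in unfolding is_dag_def V_def by auto
  qed
  have GrV: "\<forall>v. Gr v \<subseteq> V"  using dagG noa unfolding is_dag_def Gr_def V_def by auto
  have dagGr: "is_dag V k Gr"
  proof -
    have "{(u,w). u \<in> Gr w} \<subseteq> {(u,w). u \<in> G w}" unfolding Gr_def by auto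
    then have "acyclic {(u,w). u \<in> Gr w}" using dagG acyclic_subset unfolding is_dag_def by blast
    moreover have "\<forall>v. card (Gr v) \<le> k" using dagG unfolding is_dag_def Gr_def by simp
    moreover have "\<forall>v. Gr v \<subseteq> V - {v}"
    proof
      fix v
      have "Gr v \<subseteq> G v" unfolding Gr_def by simp
      then have "v \<notin> Gr v" using dagG unfolding is_dag_def by blast
      then show "Gr v \<subseteq> V - {v}" using GrV by blast
    qed
    moreover have "\<forall>v. v \<notin> V \<longrightarrow> Gr v = {}" using dagG unfolding is_dag_def Gr_def V_def by auto
    ultimately show ?thesis unfolding is_dag_def by blast
  qed
  have me_ext: "markov_equiv V H Gr" if "is_dag V k H" "markov_equiv X1 (H(Xa:=P)) G" for H
    unfolding markov_equiv_def
  proof (intro ballI allI impI)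
    fix x y Z assume xy: "x \<in> V" "y \<in> V" "Z \<subseteq> V \<and> x \<noteq> y \<and> x \<notin> Z \<and> y \<notin> Z"
    have a: "\<forall>v. Xa \<notin> H v" "H Xa = {}" using that(1) XaV unfolding is_dag_def by auto
    have b: "\<forall>v. Xa \<notin> Gr v" "Gr Xa = {}" using noa Gr_def by auto
    have ne: "x \<noteq> Xa" "y \<noteq> Xa" "Xa \<notin> Z" using xy XaV by auto
    have "d_separated H x y Z \<longleftrightarrow> d_separated (H(Xa:=P)) x y Z"
      using dsep_ext[OF a XaP ne] by simp
    also have "\<dots> \<longleftrightarrow> d_separated G x y Z"
      using that(2) xy unfolding markov_equiv_def V_def by blast
    also have "\<dots> \<longleftrightarrow> d_separated Gr x y Z"
      using dsep_ext[OF b XaP ne] GP by simp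
    finally show "d_separated H x y Z \<longleftrightarrow> d_separated Gr x y Z" .
  qed
  have HV: "\<forall>v. H v \<subseteq> V" if "is_dag V k H" for H using that unfolding is_dag_def by blast
  have "optimal_with_gap (marg D2 V) V k \<beta> Gr"
    unfolding optimal_with_gap_def
  proof (intro conjI allI impI)
    show "is_dag V k Gr" by (rule dagGr)
  next
    fix H assume H: "is_dag V k H"
    have "score D1 X1 (H(Xa:=P)) \<le> score D1 X1 G" using opt dag_ext[OF H] unfolding optimal_with_gap_def by blast
    then show "score (marg D2 V) V H \<le> score (marg D2 V) V Gr"
      using sc[OF HV[OF H]] sc[OF GrV] GP by simp
  next
    fix H assume H: "is_dag V k H \<and> \<not> markov_equiv V H Gr"
    then have "\<not> markov_equiv X1 (H(Xa:=P)) G" using me_ext by blast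
    then have "score D1 X1 (H(Xa:=P)) \<le> score D1 X1 G - \<beta>" using opt dag_ext H unfolding optimal_with_gap_def by blast
    then show "score (marg D2 V) V H \<le> score (marg D2 V) V Gr - \<beta>"
      using sc[OF HV] H sc[OF GrV] GP by simp
  qed
  then show ?thesis unfolding V_def by blast
qed

end
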